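(* Let $\mathbb F$ have characteristic $0$, let $d\ge0$, $M=\{\mathbf a\in\mathbb N^n:|\mathbf a|_1\le d\}$, let $B\subseteq M$ be nonempty and $A=\textsc{Find}(B,n)$. Then $A\subseteq M$, $|A|=|B|$, and the submatrix $T_{A,B}$ of $T$ is nonsingular.
   Context: $T$ is the matrix with rows and columns indexed by $M$ and entries $T_{\mathbf a,\mathbf b}=\binom{\mathbf b}{\mathbf a}:=\prod_{i=1}^n\binom{b_i}{a_i}$ (with $\binom{b}{a}=0$ if $a>b$); $T_{A,B}$ is its restriction to rows $A$ and columns $B$. The procedure $\textsc{Find}(B,n)$ for finite nonempty $B\subseteq\mathbb N^n$: if $n=1$, return $\{0,\dots,|B|-1\}$; otherwise let $\pi_n$ project onto the first $n-1$ coordinates, $\ell=\max_{\mathbf u\in\pi_n(B)}|\pi_n^{-1}(\mathbf u)\cap B|$, $F_i=\{\mathbf u\in\pi_n(B):|\pi_n^{-1}(\mathbf u)\cap B|\ge i\}$ for $i\in[\ell]$, $S_i=\textsc{Find}(F_i,n-1)$, and return $\bigcup_{i=1}^\ell S_i\times\{i-1\}$. *)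

theory Defs
  imports "Jordan_Normal_Form.Determinant" "HOL-Library.List_Lexorder"
begin

text \<open>Points of N^n are represented as lists of naturals of length n.
  Multi-index binomial coefficient binom(b,a) = prod_i (b_i choose a_i).\<close>

definition binom_vec :: "nat list \<Rightarrow> nat list \<Rightarrow> nat" where
  "binom_vec b a = (\<Prod>i<length a. (b ! i) choose (a ! i))"

definition Mset :: "nat \<Rightarrow> nat \<Rightarrow> nat list set" where
  "Mset n d = {a. length a = n \<and> sum_list a \<le> d}"

definition fib :: "nat list set \<Rightarrow> nat list \<Rightarrow> nat" where
  "fib B u = card {b \<in> B. butlast b = u}"

text \<open>FindA m B computes Find(B, m) (meaningful for m >= 1).\<close>
primrec FindA :: "nat \<Rightarrow> nat list set \<Rightarrow> nat list set" where
  "FindA 0 B = {}"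
| "FindA (Suc m) B =
     (if m = 0 then {[i] | i. i < card B}
      else (let P = butlast ` B;
                l = Max (fib B ` P);
                F = (\<lambda>i. {u \<in> P. i \<le> fib B u})
            in \<Union>i\<in>{1..l}. (\<lambda>u. u @ [i - 1]) ` FindA m (F i)))"

text \<open>The submatrix T_{A,B} (rows A, columns B, both in lexicographic order),
  with entries T_{a,b} = binom(b,a) in the field 'a.\<close>
definition T_sub :: "nat list set \<Rightarrow> nat list set \<Rightarrow> 'a::field mat" where
  "T_sub A B = mat (card A) (card B)
     (\<lambda>(i, j). of_nat (binom_vec (sorted_list_of_set B ! j) (sorted_list_of_set A ! i)))"

end

theory Submission
  imports Defs "HOL-Computational_Algebra.Polynomial"
begin

definition bpoly :: "nat \<Rightarrow> 'a::field_char_0 poly" where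
  "bpoly j = smult (1 / fact j) (\<Prod>i<j. [:- of_nat i, 1:])"

lemma poly_bpoly: "poly (bpoly j) (of_nat x) = (of_nat (x choose j) :: 'a::field_char_0)"
  by (simp add: bpoly_def poly_prod binomial_gbinomial gbinomial_prod_rev atLeast0LessThan)

lemma prod_lin_ne0: "(\<Prod>i<j. [:- of_nat i, 1:]) \<noteq> (0::'a::field_char_0 poly)"
  by (simp add: prod_zero_iff)

lemma degree_bpoly: "degree (bpoly j :: 'a::field_char_0 poly) = j"
proof -
  have "degree (\<Prod>i<j. [:- of_nat i, 1:] :: 'a poly) = j"
    by (subst degree_prod_sum_eq) auto
  then show ?thesis by (simp add: bpoly_def)
qed

lemma coeff_bpoly: "coeff (bpoly j :: 'a::field_char_0 poly) j = 1 / fact j"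
proof -
  have d: "degree (\<Prod>i<j. [:- of_nat i, 1:] :: 'a poly) = j"
    by (subst degree_prod_sum_eq) auto
  have "lead_coeff (\<Prod>i<j. [:- of_nat i, 1:] :: 'a poly) = 1"
    by (simp add: lead_coeff_prod)
  then show ?thesis using d by (simp add: bpoly_def)
qed

lemma bpoly_indep:
  "(\<Sum>j<k. smult (e j) (bpoly j)) = (0::'a::field_char_0 poly) \<Longrightarrow> j < k \<Longrightarrow> e j = 0"
proof (induction k arbitrary: j)
  case 0 then show ?case by simp
next
  case (Suc k)
  have c: "coeff (\<Sum>j<Suc k. smult (e j) (bpoly j)) k = e k / fact k"
  proof -
    have "coeff (\<Sum>j<Suc k. smult (e j) (bpoly j)) k = (\<Sum>j<Suc k. e j * coeff (bpoly j) k)"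
      by (simp add: coeff_sum)
    also have "\<dots> = (\<Sum>j<k. e j * coeff (bpoly j) k) + e k * coeff (bpoly k) k" by simp
    also have "(\<Sum>j<k. e j * coeff (bpoly j :: 'a poly) k) = 0"
      by (rule sum.neutral) (auto intro!: coeff_eq_0 simp: degree_bpoly)
    finally show ?thesis by (simp add: coeff_bpoly)
  qed
  have "e k / fact k = 0" by (metis c Suc.prems(1) coeff_0)
  then have ek: "e k = 0" by simp
  have "(\<Sum>j<k. smult (e j) (bpoly j)) = (0::'a poly)" using Suc.prems(1) ek by simp
  then show ?case using Suc by (cases "j = k") (auto simp: ek)
qed

lemma degree_bsum: "degree (\<Sum>j<Suc k. smult (e j) (bpoly j) :: 'a::field_char_0 poly) \<le> k"
proof (induction k)
  case 0 then show ?case by (simp add: degree_bpoly)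
next
  case (Suc k)
  have "degree (smult (e (Suc k)) (bpoly (Suc k)) :: 'a poly) \<le> Suc k"
    by (metis degree_smult_le degree_bpoly)
  then show ?case using Suc by (simp add: degree_add_le)
qed

lemma oneD:
  fixes e :: "nat \<Rightarrow> 'a::field_char_0"
  assumes "finite X" "k \<le> card X" "\<forall>x\<in>X. (\<Sum>j<k. e j * of_nat (x choose j)) = 0" "j < k"
  shows "e j = 0"
proof -
  define p where "p = (\<Sum>j<k. smult (e j) (bpoly j) :: 'a poly)"
  have roots: "\<forall>x\<in>X. poly p (of_nat x) = 0"
    using assms(3) by (simp add: p_def poly_sum poly_bpoly)
  have "p = 0"
  proof (rule ccontr)
    assume p0: "p \<noteq> 0"
    obtain k' where k': "k = Suc k'" using assms(4) by (cases k) auto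
    have dp: "degree p \<le> k'" unfolding p_def k' by (rule degree_bsum)
    have sub: "of_nat ` X \<subseteq> {x. poly p x = 0}" using roots by auto
    have "card (of_nat ` X :: 'a set) = card X"
      by (rule card_image) (simp add: inj_on_def)
    moreover have "card (of_nat ` X :: 'a set) \<le> card {x. poly p x = 0}"
      by (rule card_mono[OF poly_roots_finite[OF p0] sub])
    ultimately show False using card_poly_roots_bound[OF p0] dp assms(2) k' by linarith
  qed
  then show ?thesis using bpoly_indep[of e k j] assms(4) p_def by simp
qed


lemma FindA_Suc: "m \<noteq> 0 \<Longrightarrow> FindA (Suc m) B =
  (\<Union>i\<in>{1..Max (fib B ` (butlast ` B))}. (\<lambda>u. u @ [i - 1]) ` FindA m {u \<in> butlast ` B. i \<le> fib B u})"
  by (simp add: Let_def)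

lemma FindA_one: "FindA (Suc 0) B = (\<lambda>i. [i]) ` {..<card B}"
  by auto

lemma FindA_length: "a \<in> FindA m B \<Longrightarrow> length a = m"
proof (induction m arbitrary: B a)
  case 0 then show ?case by simp
next
  case (Suc m)
  show ?case
  proof (cases "m = 0")
    case True then show ?thesis using Suc.prems by auto
  next
    case False then show ?thesis using Suc by (auto simp: FindA_Suc)
  qed
qed

lemma FindA_finite: "finite (FindA m B)"
proof (induction m arbitrary: B)
  case 0 then show ?case by simp
next
  case (Suc m)
  show ?case
  proof (cases "m = 0")
    case True then show ?thesis by (simp only: FindA_one) auto
  next
    case False then show ?thesis using Suc by (simp add: FindA_Suc)
  qed
qed

lemma FindA_empty: "FindA m {} = {}"
proof (induction m)
  case 0 then show ?case by simp
next
  case (Suc m)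
  show ?case
  proof (cases "m = 0")
    case True then show ?thesis by (simp only: FindA_one) auto
  next
    case False then show ?thesis using Suc by (simp add: FindA_Suc)
  qed
qed

lemma card_fibres:
  assumes "finite B"
  shows "(\<Sum>u\<in>butlast ` B. fib B u) = card B"
proof -
  have "B = (\<Union>u\<in>butlast ` B. {b \<in> B. butlast b = u})" by auto
  then have "card B = card (\<Union>u\<in>butlast ` B. {b \<in> B. butlast b = u})" by simp
  also have "\<dots> = (\<Sum>u\<in>butlast ` B. card {b \<in> B. butlast b = u})"
    by (rule card_UN_disjoint) (use assms in auto)
  finally show ?thesis by (simp add: fib_def)
qed

lemma FindA_card:
  "finite B \<Longrightarrow> \<forall>b\<in>B. length b = n \<Longrightarrow> n \<ge> 1 \<Longrightarrow> card (FindA n B) = card B"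
proof (induction n arbitrary: B)
  case 0 then show ?case by simp
next
  case (Suc m)
  show ?case
  proof (cases "m = 0")
    case True then show ?thesis by (simp only: FindA_one) (subst card_image, auto simp: inj_on_def)
  next
    case False
    define P where "P = butlast ` B"
    define l where "l = Max (fib B ` P)"
    define F where "F = (\<lambda>i. {u \<in> P. i \<le> fib B u})"
    have fP: "finite P" using Suc.prems by (simp add: P_def)
    have FA: "FindA (Suc m) B = (\<Union>i\<in>{1..l}. (\<lambda>u. u @ [i - 1]) ` FindA m (F i))"
      using False by (simp add: FindA_Suc P_def l_def F_def)
    have cF: "card (FindA m (F i)) = card (F i)" for i
    proof (rule Suc.IH)
      show "finite (F i)" using fP by (simp add: F_def)
      show "\<forall>b\<in>F i. length b = m" using Suc.prems(2) by (auto simp: F_def P_def)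
      show "1 \<le> m" using False by simp
    qed
    have "card (FindA (Suc m) B) = (\<Sum>i\<in>{1..l}. card ((\<lambda>u. u @ [i - 1]) ` FindA m (F i)))"
      unfolding FA
      by (rule card_UN_disjoint) (auto simp: FindA_finite)
    also have "\<dots> = (\<Sum>i\<in>{1..l}. card (F i))"
      by (rule sum.cong) (auto simp: card_image inj_on_def cF)
    also have "\<dots> = (\<Sum>i\<in>{1..l}. \<Sum>u\<in>P. (if i \<le> fib B u then 1 else 0))"
      by (rule sum.cong) (auto simp: F_def sum.If_cases fP Int_def)
    also have "\<dots> = (\<Sum>u\<in>P. \<Sum>i\<in>{1..l}. (if i \<le> fib B u then 1 else 0))"
      by (rule sum.swap)
    also have "\<dots> = (\<Sum>u\<in>P. fib B u)"
    proof (rule sum.cong)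
      fix u assume u: "u \<in> P"
      have le: "fib B u \<le> l" unfolding l_def using fP u by (auto intro: Max_ge)
      have "(\<Sum>i\<in>{1..l}. (if i \<le> fib B u then 1 else 0::nat)) = card {i \<in> {1..l}. i \<le> fib B u}"
        by (simp add: sum.If_cases Int_def)
      also have "{i \<in> {1..l}. i \<le> fib B u} = {1..fib B u}" using le by auto
      finally show "(\<Sum>i\<in>{1..l}. (if i \<le> fib B u then 1 else 0::nat)) = fib B u" by simp
    qed simp
    also have "\<dots> = card B" unfolding P_def by (rule card_fibres) (use Suc.prems in simp)
    finally show ?thesis .
  qed
qed

lemma fib_bound:
  assumes "\<forall>b\<in>B. length b = Suc m \<and> sum_list b \<le> d" "v \<in> butlast ` B" "i \<le> fib B v" "1 \<le> i"
  shows "sum_list v + (i - 1) \<le> d"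
proof -
  define Fb where "Fb = {b \<in> B. butlast b = v}"
  have eq: "b = v @ [last b]" if "b \<in> Fb" for b
    using that assms(1) unfolding Fb_def
    by (metis (mono_tags, lifting) append_butlast_last_id length_0_conv mem_Collect_eq nat.distinct(1))
  obtain b0 where b0: "b0 \<in> Fb" using assms(2) by (auto simp: Fb_def)
  have sv: "sum_list v \<le> d" using eq[OF b0] assms(1) b0 unfolding Fb_def
    by (metis (no_types, lifting) le_add1 le_trans mem_Collect_eq sum_list_append)
  have "last ` Fb \<subseteq> {0..d - sum_list v}"
  proof
    fix x assume "x \<in> last ` Fb"
    then obtain b where b: "b \<in> Fb" "x = last b" by auto
    have "sum_list b = sum_list v + last b" using eq[OF b(1)] by (metis sum_list_append sum_list_simps add_0_right)
    moreover have "sum_list b \<le> d" using assms(1) b(1) by (auto simp: Fb_def)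
    ultimately show "x \<in> {0..d - sum_list v}" using b(2) by auto
  qed
  moreover have "inj_on last Fb" unfolding inj_on_def using eq by metis
  ultimately have "card Fb \<le> Suc (d - sum_list v)"
    by (metis card_atLeastAtMost card_image card_mono finite_atLeastAtMost diff_zero)
  then show ?thesis using assms(3,4) sv by (simp add: fib_def Fb_def)
qed

lemma FindA_M:
  "B \<subseteq> Mset n d \<Longrightarrow> n \<ge> 1 \<Longrightarrow> FindA n B \<subseteq> Mset n d"
proof (induction n arbitrary: B d)
  case 0 then show ?case by simp
next
  case (Suc m)
  show ?case
  proof (cases "m = 0")
    case True
    have "B \<subseteq> (\<lambda>x. [x]) ` {..d}"
    proof
      fix b assume "b \<in> B"
      then have "length b = 1" "sum_list b \<le> d" using Suc.prems True by (auto simp: Mset_def)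
      then show "b \<in> (\<lambda>x. [x]) ` {..d}" by (cases b) auto
    qed
    then have "card B \<le> card ((\<lambda>x. [x]) ` {..d})" by (intro card_mono) auto
    also have "\<dots> = Suc d" by (subst card_image) (auto simp: inj_on_def)
    finally have "card B \<le> Suc d" .
    then show ?thesis using True by (simp only: FindA_one) (auto simp: Mset_def)
  next
    case False
    define P where "P = butlast ` B"
    define l where "l = Max (fib B ` P)"
    define F where "F = (\<lambda>i. {u \<in> P. i \<le> fib B u})"
    have FA: "FindA (Suc m) B = (\<Union>i\<in>{1..l}. (\<lambda>u. u @ [i - 1]) ` FindA m (F i))"
      using False by (simp add: FindA_Suc P_def l_def F_def)
    show ?thesis
    proof
      fix a assume "a \<in> FindA (Suc m) B"
      then obtain i u where iu: "i \<in> {1..l}" "u \<in> FindA m (F i)" "a = u @ [i - 1]"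
        unfolding FA by auto
      have "F i \<noteq> {}" using iu(2) FindA_empty by force
      then obtain v where v: "v \<in> F i" by auto
      have Bb: "\<forall>b\<in>B. length b = Suc m \<and> sum_list b \<le> d" using Suc.prems(1) by (auto simp: Mset_def)
      have "F i \<subseteq> Mset m (d - (i - 1))"
      proof
        fix w assume w: "w \<in> F i"
        have "sum_list w + (i - 1) \<le> d"
          by (rule fib_bound[OF Bb]) (use w iu(1) in \<open>auto simp: F_def P_def\<close>)
        moreover have "length w = m" using w Bb by (auto simp: F_def P_def)
        ultimately show "w \<in> Mset m (d - (i - 1))" by (simp add: Mset_def)
      qed
      then have "u \<in> Mset m (d - (i - 1))" using Suc.IH[of "F i"] False iu(2) by auto
      moreover have "sum_list v + (i - 1) \<le> d"
        by (rule fib_bound[OF Bb]) (use v iu(1) in \<open>auto simp: F_def P_def\<close>)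
      ultimately show "a \<in> Mset (Suc m) d" using iu(3) by (auto simp: Mset_def)
    qed
  qed
qed


lemma binom_vec_snoc:
  assumes "length b = Suc (length u)"
  shows "binom_vec b (u @ [j]) = binom_vec (butlast b) u * (last b choose j)"
proof -
  have "binom_vec b (u @ [j]) = (\<Prod>i<Suc (length u). (b ! i) choose ((u @ [j]) ! i))"
    by (simp add: binom_vec_def)
  also have "\<dots> = (\<Prod>i<length u. (b ! i) choose ((u @ [j]) ! i)) * (b ! length u choose j)"
    by simp
  also have "(\<Prod>i<length u. (b ! i) choose ((u @ [j]) ! i)) = binom_vec (butlast b) u"
    unfolding binom_vec_def using assms by (intro prod.cong) (auto simp: nth_append nth_butlast)
  also have "b ! length u = last b" using assms by (subst last_conv_nth) auto
  finally show ?thesis .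
qed

lemma core:
  "finite B \<Longrightarrow> \<forall>b\<in>B. length b = n \<Longrightarrow> n \<ge> 1 \<Longrightarrow>
   \<forall>b\<in>B. (\<Sum>a\<in>FindA n B. c a * of_nat (binom_vec b a)) = (0::'a::field_char_0) \<Longrightarrow>
   a \<in> FindA n B \<Longrightarrow> c a = 0"
proof (induction n arbitrary: B c a)
  case 0 then show ?case by simp
next
  case (Suc m)
  note IHm = Suc.IH
  show ?case
  proof (cases "m = 0")
    case True
    define k where "k = card B"
    have A: "FindA (Suc m) B = (\<lambda>i. [i]) ` {..<k}" using True by (simp only: FindA_one k_def)
    obtain i where i: "i < k" "a = [i]" using Suc.prems(5) A by auto
    define X where "X = (\<lambda>b. b ! 0) ` B"
    have inj: "inj_on (\<lambda>b. b ! 0) B"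
    proof (rule inj_onI)
      fix x y assume "x \<in> B" "y \<in> B" "x ! 0 = y ! 0"
      moreover have "length x = 1" "length y = 1" using \<open>x \<in> B\<close> \<open>y \<in> B\<close> Suc.prems(2) True by auto
      ultimately show "x = y" by (metis One_nat_def length_0_conv length_Suc_conv nth_Cons_0)
    qed
    have cX: "card X = k" unfolding X_def k_def using inj by (simp add: card_image)
    have "c [i] = 0"
    proof (rule oneD[of X k "\<lambda>j. c [j]"])
      show "finite X" using Suc.prems(1) by (simp add: X_def)
      show "k \<le> card X" using cX by simp
      show "i < k" by (rule i(1))
      show "\<forall>x\<in>X. (\<Sum>j<k. c [j] * of_nat (x choose j)) = 0"
      proof
        fix x assume "x \<in> X"
        then obtain b where b: "b \<in> B" "x = b ! 0" by (auto simp: X_def)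
        have "0 = (\<Sum>a\<in>(\<lambda>i. [i]) ` {..<k}. c a * of_nat (binom_vec b a))"
          using Suc.prems(4) b(1) A by simp
        also have "\<dots> = (\<Sum>j<k. c [j] * of_nat (binom_vec b [j]))"
          by (subst sum.reindex) (auto simp: inj_on_def)
        also have "\<dots> = (\<Sum>j<k. c [j] * of_nat (x choose j))"
          by (simp add: binom_vec_def b(2))
        finally show "(\<Sum>j<k. c [j] * of_nat (x choose j)) = 0" by simp
      qed
    qed
    then show ?thesis using i by simp
  next
    case False
    define P where "P = butlast ` B"
    define l where "l = Max (fib B ` P)"
    define F where "F = (\<lambda>i. {u \<in> P. i \<le> fib B u})"
    define S where "S = (\<lambda>i. FindA m (F i))"
    have fP: "finite P" using Suc.prems by (simp add: P_def)
    have FA0: "FindA (Suc m) B = (\<Union>i\<in>{1..l}. (\<lambda>u. u @ [i - 1]) ` S i)"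
      using False by (simp add: FindA_Suc P_def l_def F_def S_def)
    have FA: "FindA (Suc m) B = (\<Union>j\<in>{..<l}. (\<lambda>u. u @ [j]) ` S (Suc j))"
    proof -
      have "{1..l} = Suc ` {..<l}" by (simp add: image_Suc_lessThan)
      then show ?thesis unfolding FA0 by simp
    qed
    define q where "q = (\<lambda>j v. (\<Sum>u\<in>S (Suc j). c (u @ [j]) * of_nat (binom_vec v u)) :: 'a)"
    have H: "(\<Sum>j<l. q j (butlast b) * of_nat (last b choose j)) = 0" if b: "b \<in> B" for b
    proof -
      have lb: "length b = Suc m" using b Suc.prems(2) by auto
      have "0 = (\<Sum>a\<in>FindA (Suc m) B. c a * of_nat (binom_vec b a))" using Suc.prems(4) b by simp
      also have "\<dots> = (\<Sum>j<l. \<Sum>a\<in>(\<lambda>u. u @ [j]) ` S (Suc j). c a * of_nat (binom_vec b a))"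
        unfolding FA by (rule sum.UNION_disjoint) (auto simp: S_def FindA_finite)
      also have "\<dots> = (\<Sum>j<l. \<Sum>u\<in>S (Suc j). c (u @ [j]) * of_nat (binom_vec b (u @ [j])))"
        by (rule sum.cong) (auto simp: sum.reindex inj_on_def)
      also have "\<dots> = (\<Sum>j<l. q j (butlast b) * of_nat (last b choose j))"
        unfolding q_def sum_distrib_right
      proof (intro sum.cong refl)
        fix j u assume "u \<in> S (Suc j)"
        then have "length u = m" by (simp add: S_def FindA_length)
        then show "c (u @ [j]) * of_nat (binom_vec b (u @ [j])) =
          c (u @ [j]) * of_nat (binom_vec (butlast b) u) * of_nat (last b choose j)"
          using lb by (simp add: binom_vec_snoc)
      qed
      finally show ?thesis by simp
    qed
    have main: "\<forall>u\<in>S (Suc j). c (u @ [j]) = 0" if "j < l" for j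
      using that
    proof (induction "l - j" arbitrary: j rule: less_induct)
      case less
      have qz: "q j' v = 0" if "j < j'" "j' < l" for j' v
      proof -
        have "\<forall>u\<in>S (Suc j'). c (u @ [j']) = 0" using less.hyps[of j'] that by simp
        then show ?thesis by (simp add: q_def)
      qed
      have "q j v = 0" if v: "v \<in> F (Suc j)" for v
      proof -
        define Fb where "Fb = {b \<in> B. butlast b = v}"
        have eq: "b = v @ [last b]" if "b \<in> Fb" for b
          using that Suc.prems(2) unfolding Fb_def
          by (metis (mono_tags, lifting) append_butlast_last_id length_0_conv mem_Collect_eq nat.distinct(1))
        have inj: "inj_on last Fb" unfolding inj_on_def using eq by metis
        have cX: "card (last ` Fb) = fib B v" using inj by (simp add: card_image fib_def Fb_def)
        show ?thesis
        proof (rule oneD[of "last ` Fb" "Suc j" "\<lambda>j'. q j' v"])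
          show "finite (last ` Fb)" using Suc.prems(1) by (simp add: Fb_def)
          show "Suc j \<le> card (last ` Fb)" using cX v by (simp add: F_def)
          show "j < Suc j" by simp
          show "\<forall>x\<in>last ` Fb. (\<Sum>j'<Suc j. q j' v * of_nat (x choose j')) = 0"
          proof
            fix x assume "x \<in> last ` Fb"
            then obtain b where b: "b \<in> B" "butlast b = v" "x = last b" by (auto simp: Fb_def)
            have "0 = (\<Sum>j'<l. q j' v * of_nat (x choose j'))" using H[OF b(1)] b by simp
            also have "\<dots> = (\<Sum>j'<Suc j. q j' v * of_nat (x choose j'))"
              by (rule sum.mono_neutral_right) (use less.prems qz in auto)
            finally show "(\<Sum>j'<Suc j. q j' v * of_nat (x choose j')) = 0" by simp
          qed
        qed
      qed
      then have vanish: "\<forall>v\<in>F (Suc j). (\<Sum>u\<in>FindA m (F (Suc j)). c (u @ [j]) * of_nat (binom_vec v u)) = 0"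
        by (simp add: q_def S_def)
      show ?case
      proof
        fix u assume u: "u \<in> S (Suc j)"
        show "c (u @ [j]) = 0"
        proof (rule IHm[where c = "\<lambda>u. c (u @ [j])", OF _ _ _ vanish])
          show "finite (F (Suc j))" using fP by (simp add: F_def)
          show "\<forall>b\<in>F (Suc j). length b = m" using Suc.prems(2) by (auto simp: F_def P_def)
          show "1 \<le> m" using False by simp
          show "u \<in> FindA m (F (Suc j))" using u by (simp add: S_def)
        qed
      qed
    qed
    obtain j u where "j < l" "u \<in> S (Suc j)" "a = u @ [j]" using Suc.prems(5) unfolding FA by auto
    then show ?thesis using main by simp
  qed
qed


lemma Mset_finite: "finite (Mset n d)"
proof -
  have "Mset n d \<subseteq> {xs. set xs \<subseteq> {0..d} \<and> length xs = n}"
    by (auto simp: Mset_def dest: member_le_sum_list)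
  moreover have "finite {xs. set xs \<subseteq> {0..d} \<and> length xs = n}"
    by (rule finite_lists_length_eq) simp
  ultimately show ?thesis by (rule finite_subset)
qed

theorem lemma4p6:
  fixes n d :: nat and B :: "nat list set"
  assumes "n \<ge> 1" and "B \<noteq> {}" and "B \<subseteq> Mset n d"
  shows "FindA n B \<subseteq> Mset n d \<and> card (FindA n B) = card B
         \<and> det (T_sub (FindA n B) B :: 'a::field_char_0 mat) \<noteq> 0"
proof -
  have fB: "finite B" using assms(3) Mset_finite finite_subset by blast
  have lB: "\<forall>b\<in>B. length b = n" using assms(3) by (auto simp: Mset_def)
  define A where "A = FindA n B"
  define N where "N = card B"
  have cA: "card A = N" unfolding A_def N_def using FindA_card[OF fB lB assms(1)] .
  have fA: "finite A" unfolding A_def by (rule FindA_finite)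
  define T where "T = (T_sub A B :: 'a mat)"
  have Tc: "T \<in> carrier_mat N N" by (simp add: T_def T_sub_def cA N_def)
  have TTc: "transpose_mat T \<in> carrier_mat N N" using Tc by simp
  have "det T \<noteq> 0"
  proof
    assume "det T = 0"
    then have "det (transpose_mat T) = 0" using det_transpose[OF Tc] by simp
    then obtain v where v: "v \<in> carrier_vec N" "v \<noteq> 0\<^sub>v N" "transpose_mat T *\<^sub>v v = 0\<^sub>v N"
      using det_0_iff_vec_prod_zero[OF TTc] by blast
    define sA where "sA = sorted_list_of_set A"
    define sB where "sB = sorted_list_of_set B"
    have lsA: "length sA = N" using cA fA by (simp add: sA_def)
    have lsB: "length sB = N" using fB by (simp add: sB_def N_def)
    have bij: "bij_betw ((!) sA) {..<N} A"
      by (rule bij_betw_nth) (use fA lsA in \<open>auto simp: sA_def\<close>)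
    define c where "c = (\<lambda>a. v $ (the_inv_into {..<N} ((!) sA) a))"
    have vc: "v $ i = c (sA ! i)" if "i < N" for i
      using that bij by (simp add: c_def the_inv_into_f_f bij_betw_def)
    have "\<forall>b\<in>B. (\<Sum>a\<in>A. c a * of_nat (binom_vec b a)) = (0::'a)"
    proof
      fix b assume b: "b \<in> B"
      then obtain j where j: "j < N" "b = sB ! j"
        using fB lsB by (metis in_set_conv_nth sB_def set_sorted_list_of_set)
      have "0 = (transpose_mat T *\<^sub>v v) $ j" using v(3) j(1) by simp
      also have "\<dots> = (\<Sum>i<N. T $$ (i, j) * v $ i)"
        using Tc v(1) j(1) by (simp add: scalar_prod_def atLeast0LessThan)
      also have "\<dots> = (\<Sum>i<N. c (sA ! i) * of_nat (binom_vec b (sA ! i)))"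
        using j cA by (intro sum.cong refl) (simp add: T_def T_sub_def vc sA_def sB_def N_def)
      also have "\<dots> = (\<Sum>a\<in>A. c a * of_nat (binom_vec b a))"
        by (rule sum.reindex_bij_betw[OF bij])
      finally show "(\<Sum>a\<in>A. c a * of_nat (binom_vec b a)) = 0" by simp
    qed
    then have c0: "c a = 0" if "a \<in> A" for a
      using core[OF fB lB assms(1)] that unfolding A_def by blast
    have "v = 0\<^sub>v N"
    proof (rule eq_vecI)
      fix i assume "i < dim_vec (0\<^sub>v N :: 'a vec)"
      then have i: "i < N" by simp
      have "sA ! i \<in> A" using bij i by (auto simp: bij_betw_def)
      then show "v $ i = 0\<^sub>v N $ i" using vc[OF i] c0 i by simp
    qed (use v(1) in simp)
    then show False using v(2) by simp
  qed
  moreover have "A \<subseteq> Mset n d" unfolding A_def by (rule FindA_M[OF assms(3,1)])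
  ultimately show ?thesis using cA by (simp add: A_def T_def N_def)
qed

end
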